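(* Assume the standing setup below. Let $x\in X$ and let $1\le i\le j\le k$ be such that $(s_i,[x]_{s_i,X})\to(s_j,[x]_{s_j,X})$ is a layer of $X$. Suppose that either $y\in[x]_{s_i,Y}$ or $y\notin[x]_{s_j,Y}$. Then $[x]_{s_i,Y}=[x]_{s_j,Y}$ (so this edge is a partial layer for $Y$), and for any phase change numbers $s\le s_i$ and $t\ge s_j$ of $Y$ with $[x]_{s,Y}=[x]_{t,Y}$ (in particular for the layer $(s,[x]_{s,Y})\to(t,[x]_{t,Y})$ of $Y$ containing this edge) one has $s_{i-1}<s\le s_i$ and $s_j\le t<s_{j+1}$.
   Context: For a finite set $Z\subset\mathbb{R}^n$ and a real number $s\ge 0$, the Vietoris–Rips complex $V_s(Z)$ is the simplicial complex with vertex set $Z$ whose simplices are the nonempty subsets $\sigma\subseteq Z$ with $d(z,z')\le s$ for all $z,z'\in\sigma$ ($d$ the Euclidean distance). For $z\in Z$, $[z]_{s,Z}\subseteq Z$ denotes the set of vertices of the path component of $V_s(Z)$ containing $z$; for $s\le t$, $[z]_{s,Z}\subseteq[z]_{t,Z}$. The phase change numbers of $Z$ are the distinct values of $d(z,z')$, $z,z'\in Z$. A partial layer for $Z$ is an edge $(s,[z]_{s,Z})\to(t,[z]_{t,Z})$ with $s\le t$ and $[z]_{s,Z}=[z]_{t,Z}$ as subsets of $Z$. A layer of $Z$ is a partial layer $(s,[z]_{s,Z})\to(t,[z]_{t,Z})$ such that $s,t$ are phase change numbers of $Z$ and which is maximal: there are no phase change numbers $s'\le s$, $t'\ge t$ of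 $Z$ with $(s',t')\ne(s,t)$ and $[z]_{s',Z}=[z]_{t',Z}$. Standing setup: $X\subset\mathbb{R}^n$ is a finite set with at least two points, $y\in\mathbb{R}^n\setminus X$, $Y=X\sqcup\{y\}$. The phase change numbers of $X$ are $0=s_0<s_1<\dots<s_k$; set $s_{k+1}=+\infty$. There are $x_0\in X$ and a real $r>0$ with $d(y,x_0)<r$ and $r<s_{i+1}-s_i$ for all $0\le i<k$. *)

theory Defs
  imports "HOL-Analysis.Analysis"
begin

text \<open>Edge relation of the 1-skeleton of the Vietoris-Rips complex V_s(Z).\<close>
definition vr_edge :: "real \<Rightarrow> 'a::metric_space set \<Rightarrow> 'a \<Rightarrow> 'a \<Rightarrow> bool" where
  "vr_edge s Z u v \<longleftrightarrow> u \<in> Z \<and> v \<in> Z \<and> dist u v \<le> s"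

definition vr_comp :: "real \<Rightarrow> 'a::metric_space set \<Rightarrow> 'a \<Rightarrow> 'a set" where
  "vr_comp s Z z = {w. (vr_edge s Z)\<^sup>*\<^sup>* z w}"

definition pcn :: "'a::metric_space set \<Rightarrow> real set" where
  "pcn Z = {dist z z' | z z'. z \<in> Z \<and> z' \<in> Z}"

definition is_layer :: "'a::metric_space set \<Rightarrow> 'a \<Rightarrow> real \<Rightarrow> real \<Rightarrow> bool" where
  "is_layer Z z s t \<longleftrightarrow>
     s \<in> pcn Z \<and> t \<in> pcn Z \<and> s \<le> t \<and> vr_comp s Z z = vr_comp t Z z \<and>
     \<not> (\<exists>s' t'. s' \<in> pcn Z \<and> t' \<in> pcn Z \<and> s' \<le> s \<and> t \<le> t' \<and> (s', t') \<noteq> (s, t)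
                \<and> vr_comp s' Z z = vr_comp t' Z z)"

end

theory Submission
  imports Defs
begin

lemma comp_mono: "a \<le> b \<Longrightarrow> vr_comp a Z x \<subseteq> vr_comp b Z x"
  unfolding vr_comp_def
proof safe
  fix w assume "a \<le> b" "(vr_edge a Z)\<^sup>*\<^sup>* x w"
  then show "(vr_edge b Z)\<^sup>*\<^sup>* x w"
    by (rule_tac rtranclp_mono[THEN predicate2D, rotated]) (auto simp: vr_edge_def)
qed

lemma comp_sub_X: "vr_comp a X x \<subseteq> vr_comp a (insert y X) x"
  unfolding vr_comp_def
proof safe
  fix w assume "(vr_edge a X)\<^sup>*\<^sup>* x w"
  then show "(vr_edge a (insert y X))\<^sup>*\<^sup>* x w"
    by (rule_tac rtranclp_mono[THEN predicate2D, rotated]) (auto simp: vr_edge_def)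
qed

lemma comp_sub: "vr_comp a Z x \<subseteq> insert x Z"
  unfolding vr_comp_def
proof safe
  fix w assume "(vr_edge a Z)\<^sup>*\<^sup>* x w" "w \<notin> Z"
  then show "w = x"
    by (induction rule: rtranclp_induct) (auto simp: vr_edge_def)
qed

lemma close:
  fixes s :: "nat \<Rightarrow> real"
  assumes "strict_mono_on {0..k} s" and "s ` {0..k} = pcn X"
    and "x0 \<in> X" and "dist y x0 < r"
    and "\<forall>l<k. r < s (Suc l) - s l"
    and "b \<in> X" "dist b y \<le> s l" "l \<le> k"
  shows "dist b x0 \<le> s l"
proof -
  have mono: "\<And>p q. p \<le> q \<Longrightarrow> q \<le> k \<Longrightarrow> s p \<le> s q"
  proof -
    fix p q :: nat assume "p \<le> q" "q \<le> k"
    then show "s p \<le> s q" using assms(1) unfolding strict_mono_on_def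
      by (cases "p = q") (auto, meson le_trans less_imp_le nat_less_le)
  qed
  have "dist b x0 \<in> pcn X" using assms unfolding pcn_def by auto
  then obtain m where m: "m \<le> k" "dist b x0 = s m" using assms(2) by force
  have lt: "dist b x0 < s l + r"
    using dist_triangle[of b x0 y] assms by (simp add: dist_commute)
  show ?thesis
  proof (cases "m \<le> l")
    case True then show ?thesis using m mono assms by auto
  next
    case False
    then have "l < k" "Suc l \<le> m" using m by auto
    then have "s (Suc l) \<le> s m" "r < s (Suc l) - s l" using mono m assms(5) by auto
    then show ?thesis using lt m by linarith
  qed
qed

lemma keyL:
  fixes s :: "nat \<Rightarrow> real"
  assumes "strict_mono_on {0..k} s" and "s ` {0..k} = pcn X"
    and "x0 \<in> X" and "dist y x0 < r"
    and "\<forall>l<k. r < s (Suc l) - s l"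
    and "x \<in> X" "l \<le> k" "y \<notin> X"
  shows "vr_comp (s l) (insert y X) x \<inter> X = vr_comp (s l) X x"
proof
  show "vr_comp (s l) X x \<subseteq> vr_comp (s l) (insert y X) x \<inter> X"
    using comp_sub_X[of "s l" X x y] comp_sub[of "s l" X x] assms(6) by auto
next
  have cl: "\<And>b. b \<in> X \<Longrightarrow> dist b y \<le> s l \<Longrightarrow> dist b x0 \<le> s l"
    using close[OF assms(1-5)] assms(7) by blast
  have "(vr_edge (s l) (insert y X))\<^sup>*\<^sup>* x w \<Longrightarrow>
     (w \<in> X \<and> (vr_edge (s l) X)\<^sup>*\<^sup>* x w) \<or>
     (w = y \<and> (\<exists>a. a \<in> X \<and> (vr_edge (s l) X)\<^sup>*\<^sup>* x a \<and> dist a y \<le> s l))" for w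
  proof (induction rule: rtranclp_induct)
    case base then show ?case using assms(6) by auto
  next
    case (step w v)
    from step.hyps(2) have e: "w \<in> insert y X" "v \<in> insert y X" "dist w v \<le> s l"
      by (auto simp: vr_edge_def)
    show ?case
    proof (cases "w = y")
      case True
      then obtain a where a: "a \<in> X" "(vr_edge (s l) X)\<^sup>*\<^sup>* x a" "dist a y \<le> s l"
        using step.IH assms(8) by auto
      show ?thesis
      proof (cases "v = y")
        case True then show ?thesis using a by auto
      next
        case False
        then have v: "v \<in> X" using e by auto
        have "dist a x0 \<le> s l" using cl a by auto
        moreover have "dist v x0 \<le> s l" using cl[OF v] e True by (simp add: dist_commute)
        ultimately have "vr_edge (s l) X a x0" "vr_edge (s l) X x0 v"
          using a v assms(3) by (auto simp: vr_edge_def dist_commute)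
        then have "(vr_edge (s l) X)\<^sup>*\<^sup>* x v" using a(2)
          by (meson rtranclp.rtrancl_into_rtrancl)
        then show ?thesis using v by auto
      qed
    next
      case False
      then have w: "w \<in> X" "(vr_edge (s l) X)\<^sup>*\<^sup>* x w" using step.IH by auto
      show ?thesis
      proof (cases "v = y")
        case True then show ?thesis using w e by auto
      next
        case False
        then have "v \<in> X" using e by auto
        then have "vr_edge (s l) X w v" using w e by (auto simp: vr_edge_def)
        then show ?thesis using w \<open>v \<in> X\<close> by (meson rtranclp.rtrancl_into_rtrancl)
      qed
    qed
  qed
  then show "vr_comp (s l) (insert y X) x \<inter> X \<subseteq> vr_comp (s l) X x"
    unfolding vr_comp_def using assms(8) by blast
qed

theorem proposition15:
  fixes X :: "'a::euclidean_space set" and y x x0 :: 'a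
    and s :: "nat \<Rightarrow> real" and k i j :: nat and r :: real
  assumes "finite X" and "card X \<ge> 2"
    and "y \<notin> X"
    and "strict_mono_on {0..k} s" and "s ` {0..k} = pcn X"
    and "x0 \<in> X" and "r > 0" and "dist y x0 < r"
    and "\<forall>l<k. r < s (Suc l) - s l"
    and "x \<in> X" and "1 \<le> i" and "i \<le> j" and "j \<le> k"
    and "is_layer X x (s i) (s j)"
    and "y \<in> vr_comp (s i) (insert y X) x \<or> y \<notin> vr_comp (s j) (insert y X) x"
  shows "vr_comp (s i) (insert y X) x = vr_comp (s j) (insert y X) x \<and>
         (\<forall>s' t'. s' \<in> pcn (insert y X) \<and> t' \<in> pcn (insert y X) \<and> s' \<le> s i \<and> s j \<le> t'
             \<and> vr_comp s' (insert y X) x = vr_comp t' (insert y X) x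
           \<longrightarrow> s (i - 1) < s' \<and> s' \<le> s i \<and> s j \<le> t' \<and> (j < k \<longrightarrow> t' < s (Suc j)))"
proof -
  define Y where "Y = insert y X"
  have L: "\<And>l. l \<le> k \<Longrightarrow> vr_comp (s l) Y x \<inter> X = vr_comp (s l) X x"
    unfolding Y_def using keyL[OF assms(4,5,6,8,9,10) _ assms(3)] by blast
  have smono: "\<And>p q. p < q \<Longrightarrow> q \<le> k \<Longrightarrow> s p < s q"
    using assms(4) unfolding strict_mono_on_def by auto
  have mono: "\<And>p q. p \<le> q \<Longrightarrow> q \<le> k \<Longrightarrow> s p \<le> s q"
    using smono by (metis order_le_less)
  have inpcn: "\<And>l. l \<le> k \<Longrightarrow> s l \<in> pcn X" using assms(5) by auto
  have lay: "vr_comp (s i) X x = vr_comp (s j) X x"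
    and nomax: "\<And>s' t'. s' \<in> pcn X \<Longrightarrow> t' \<in> pcn X \<Longrightarrow> s' \<le> s i \<Longrightarrow> s j \<le> t'
      \<Longrightarrow> (s', t') \<noteq> (s i, s j) \<Longrightarrow> vr_comp s' X x \<noteq> vr_comp t' X x"
    using assms(14) unfolding is_layer_def by blast+
  have sub: "\<And>a. vr_comp a Y x \<subseteq> insert y X"
    using comp_sub[of _ Y x] assms(10) unfolding Y_def by auto
  have c1: "vr_comp (s i) Y x = vr_comp (s j) Y x"
  proof
    show "vr_comp (s i) Y x \<subseteq> vr_comp (s j) Y x" using comp_mono mono assms by blast
  next
    show "vr_comp (s j) Y x \<subseteq> vr_comp (s i) Y x"
    proof
      fix w assume w: "w \<in> vr_comp (s j) Y x"
      show "w \<in> vr_comp (s i) Y x"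
      proof (cases "w = y")
        case True then show ?thesis using w assms(15) Y_def by auto
      next
        case False
        then have "w \<in> X" using w sub by auto
        then have "w \<in> vr_comp (s j) X x" using L[of j] w assms by auto
        then have "w \<in> vr_comp (s i) X x" using lay by auto
        then show ?thesis using L[of i] assms by auto
      qed
    qed
  qed
  have c2: "s (i - 1) < s' \<and> s' \<le> s i \<and> s j \<le> t' \<and> (j < k \<longrightarrow> t' < s (Suc j))"
    if h: "s' \<le> s i" "s j \<le> t'" "vr_comp s' Y x = vr_comp t' Y x" for s' t'
  proof -
    have ik: "i \<le> k" "i - 1 \<le> k" "j \<le> k" "i - 1 \<le> j" using assms(12,13) by auto
    have A: "s (i - 1) < s'"
    proof (rule ccontr)
      assume "\<not> s (i - 1) < s'"
      then have le: "s' \<le> s (i - 1)" by simp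
      have "vr_comp s' Y x \<subseteq> vr_comp (s (i - 1)) Y x" using comp_mono[OF le] .
      moreover have "vr_comp (s (i - 1)) Y x \<subseteq> vr_comp (s j) Y x"
        using comp_mono[OF mono[OF ik(4) ik(3)]] .
      moreover have "vr_comp (s j) Y x \<subseteq> vr_comp t' Y x" using comp_mono[OF h(2)] .
      ultimately have "vr_comp (s (i - 1)) Y x = vr_comp (s j) Y x" using h(3) by blast
      then have eq: "vr_comp (s (i - 1)) X x = vr_comp (s j) X x"
        using L[OF ik(2)] L[OF ik(3)] by simp
      have "i - 1 < i" using assms(11) by simp
      then have "s (i - 1) < s i" using smono ik(1) by blast
      then have "(s (i - 1), s j) \<noteq> (s i, s j)" by simp
      then show False
        using nomax[OF inpcn[OF ik(2)] inpcn[OF ik(3)]] eq \<open>s (i - 1) < s i\<close> by simp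
    qed
    have B: "j < k \<longrightarrow> t' < s (Suc j)"
    proof
      assume jk: "j < k"
      then have jk': "Suc j \<le> k" "i \<le> Suc j" using assms(12) by auto
      show "t' < s (Suc j)"
      proof (rule ccontr)
        assume "\<not> t' < s (Suc j)"
        then have le: "s (Suc j) \<le> t'" by simp
        have "vr_comp (s i) Y x \<subseteq> vr_comp (s (Suc j)) Y x"
          using comp_mono[OF mono[OF jk'(2) jk'(1)]] .
        moreover have "vr_comp (s (Suc j)) Y x \<subseteq> vr_comp t' Y x" using comp_mono[OF le] .
        moreover have "vr_comp s' Y x \<subseteq> vr_comp (s i) Y x" using comp_mono[OF h(1)] .
        ultimately have "vr_comp (s i) Y x = vr_comp (s (Suc j)) Y x" using h(3) by blast
        then have eq: "vr_comp (s i) X x = vr_comp (s (Suc j)) X x"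
          using L[OF ik(1)] L[OF jk'(1)] by simp
        have "s j < s (Suc j)" using smono jk by auto
        then have "(s i, s (Suc j)) \<noteq> (s i, s j)" by simp
        then show False
          using nomax[OF inpcn[OF ik(1)] inpcn[OF jk'(1)]] eq \<open>s j < s (Suc j)\<close> by simp
      qed
    qed
    show ?thesis using A B h by auto
  qed
  show ?thesis using c1 c2 unfolding Y_def by blast
qed

end
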